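(* Let $I=(N,O,\succsim)$ be a general instance and $p$ a generalized deterministic matching, with associated deterministic matching $p'$ for the associated instance $I'$. Then $p$ is weakly stable if and only if $p'$ is weakly stable.
   Context: General instance: $N=\{1,\dots,n\}$ agents, $O=\{o_1,\dots,o_m\}$ objects ($m,n\ge1$ arbitrary), $\emptyset$ the null object. Each agent $i$ has a weak order $\succsim_i$ over $O\cup\{\emptyset\}$ and each object $o$ a weak order $\succsim_o$ over $N\cup\{\emptyset\}$, with either $o\succ_i\emptyset$ or $\emptyset\succ_i o$, and either $i\succ_o\emptyset$ or $\emptyset\succ_o i$. $(i,o)$ is an acceptable pair if $o\succ_i\emptyset$ and $i\succ_o\emptyset$. A generalized deterministic matching is an $n\times m$ $\{0,1\}$-matrix with at most one $1$ per row and column. $p$ is individually rational if $p(i,o)=0$ whenever $\emptyset\succ_i o$ or $\emptyset\succ_o i$. $p$ is weakly stable if it is individually rational and there is no acceptable pair $(i,o)$ with $\sum_{o':o'\succsim_i o}p(i,o')=0$ and $\sum_{j:j\succsim_o i}p(j,o)=0$. Associated instance: $D=\{d_1,\dots,d_m\}$, $\Phi=\{\phi_1,\dots,\phi_n\}$, $N'=N\cup D$, $O'=O\cup\Phi$. Weak orders $\succsim'$ (blocks from best to worst, consecutive blocks strictly ordered): for $i\in N$: objects acceptable to $i$ ordered by $\succsim_i$, then $\phi_i$, then $\phi_k$ ($k\ne i$) in increasing index, then objects unacceptable to $i$ ordered by $\succsim_i$; for $o_j$: agents acceptable to $o_j$ ordered by $\succsim_{o_j}$, then $d_j$, then $d_k$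 ($k\ne j$) in increasing index, then agents unacceptable to $o_j$ ordered by $\succsim_{o_j}$; for $d_j$: $o_j$, then the other objects of $O$ in increasing index, then null objects with $\phi_k\succsim'_{d_j}\phi_l$ iff $k\succsim_{o_j}l$; for $\phi_i$: $i$, then other agents of $N$ in increasing index, then dummies with $d_k\succsim'_{\phi_i}d_l$ iff $o_k\succsim_i o_l$. The associated matching $p'$: $p'(i,o_j)=p(i,o_j)$, $p'(d_j,\phi_i)=p(i,o_j)$, $p'(i,\phi_i)=1-\sum_{o}p(i,o)$, $p'(d_j,o_j)=1-\sum_{i}p(i,o_j)$, all other entries $0$. A deterministic matching $q$ for $I'$ is weakly stable if there are no $a,b\in N'$, $c,c'\in O'$ with $q(a,c')=1$, $q(b,c)=1$, $c\succ'_a c'$, $a\succ'_c b$. *)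

theory Defs
  imports Main
begin

text \<open>A preference of an agent over
  O \<union> {null} is a relation on nat option (None = null object);
  likewise for objects over N \<union> {null}.  R x y means x is weakly preferred to y.\<close>

definition weak_order_on :: "'a set \<Rightarrow> ('a \<Rightarrow> 'a \<Rightarrow> bool) \<Rightarrow> bool" where
  "weak_order_on A R \<longleftrightarrow>
     (\<forall>x\<in>A. \<forall>y\<in>A. R x y \<or> R y x) \<and>
     (\<forall>x\<in>A. \<forall>y\<in>A. \<forall>z\<in>A. R x y \<longrightarrow> R y z \<longrightarrow> R x z)"

definition strict :: "('a \<Rightarrow> 'a \<Rightarrow> bool) \<Rightarrow> 'a \<Rightarrow> 'a \<Rightarrow> bool" where
  "strict R x y \<longleftrightarrow> R x y \<and> \<not> R y x"

definition general_instance ::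
  "nat \<Rightarrow> nat \<Rightarrow> (nat \<Rightarrow> nat option \<Rightarrow> nat option \<Rightarrow> bool)
       \<Rightarrow> (nat \<Rightarrow> nat option \<Rightarrow> nat option \<Rightarrow> bool) \<Rightarrow> bool" where
  "general_instance n m PA PO \<longleftrightarrow>
     (\<forall>i\<in>{1..n}. weak_order_on (Some ` {1..m} \<union> {None}) (PA i) \<and>
        (\<forall>ob\<in>{1..m}. strict (PA i) (Some ob) None \<or> strict (PA i) None (Some ob))) \<and>
     (\<forall>ob\<in>{1..m}. weak_order_on (Some ` {1..n} \<union> {None}) (PO ob) \<and>
        (\<forall>i\<in>{1..n}. strict (PO ob) (Some i) None \<or> strict (PO ob) None (Some i)))"

definition acceptable ::
  "(nat \<Rightarrow> nat option \<Rightarrow> nat option \<Rightarrow> bool) \<Rightarrow> (nat \<Rightarrow> nat option \<Rightarrow> nat option \<Rightarrow> bool)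
     \<Rightarrow> nat \<Rightarrow> nat \<Rightarrow> bool" where
  "acceptable PA PO i ob \<longleftrightarrow> strict (PA i) (Some ob) None \<and> strict (PO ob) (Some i) None"

definition gen_det_matching :: "nat \<Rightarrow> nat \<Rightarrow> (nat \<Rightarrow> nat \<Rightarrow> nat) \<Rightarrow> bool" where
  "gen_det_matching n m p \<longleftrightarrow>
     (\<forall>i\<in>{1..n}. \<forall>j\<in>{1..m}. p i j \<in> {0, 1}) \<and>
     (\<forall>i\<in>{1..n}. card {j\<in>{1..m}. p i j = 1} \<le> 1) \<and>
     (\<forall>j\<in>{1..m}. card {i\<in>{1..n}. p i j = 1} \<le> 1)"

definition individually_rational ::
  "nat \<Rightarrow> nat \<Rightarrow> (nat \<Rightarrow> nat option \<Rightarrow> nat option \<Rightarrow> bool)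
       \<Rightarrow> (nat \<Rightarrow> nat option \<Rightarrow> nat option \<Rightarrow> bool) \<Rightarrow> (nat \<Rightarrow> nat \<Rightarrow> nat) \<Rightarrow> bool" where
  "individually_rational n m PA PO p \<longleftrightarrow>
     (\<forall>i\<in>{1..n}. \<forall>ob\<in>{1..m}.
        (strict (PA i) None (Some ob) \<or> strict (PO ob) None (Some i)) \<longrightarrow> p i ob = 0)"

definition weakly_stable ::
  "nat \<Rightarrow> nat \<Rightarrow> (nat \<Rightarrow> nat option \<Rightarrow> nat option \<Rightarrow> bool)
       \<Rightarrow> (nat \<Rightarrow> nat option \<Rightarrow> nat option \<Rightarrow> bool) \<Rightarrow> (nat \<Rightarrow> nat \<Rightarrow> nat) \<Rightarrow> bool" where
  "weakly_stable n m PA PO p \<longleftrightarrow>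
     individually_rational n m PA PO p \<and>
     \<not> (\<exists>i\<in>{1..n}. \<exists>ob\<in>{1..m}. acceptable PA PO i ob \<and>
          (\<Sum>ob'\<in>{ob'\<in>{1..m}. PA i (Some ob') (Some ob)}. p i ob') = 0 \<and>
          (\<Sum>j\<in>{j\<in>{1..n}. PO ob (Some j) (Some i)}. p j ob) = 0)"

text \<open>Ag i = agent i, Dm j = dummy agent d_j; Ob j = object o_j, Ph i = null object phi_i.\<close>
datatype agent' = Ag nat | Dm nat
datatype object' = Ob nat | Ph nat

definition N' :: "nat \<Rightarrow> nat \<Rightarrow> agent' set" where
  "N' n m = Ag ` {1..n} \<union> Dm ` {1..m}"

definition O' :: "nat \<Rightarrow> nat \<Rightarrow> object' set" where
  "O' n m = Ob ` {1..m} \<union> Ph ` {1..n}"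

definition lexpref :: "('a \<Rightarrow> nat) \<Rightarrow> ('a \<Rightarrow> 'a \<Rightarrow> bool) \<Rightarrow> 'a \<Rightarrow> 'a \<Rightarrow> bool" where
  "lexpref blk W x y \<longleftrightarrow> blk x < blk y \<or> (blk x = blk y \<and> W x y)"

fun agent_block :: "(nat \<Rightarrow> nat option \<Rightarrow> nat option \<Rightarrow> bool) \<Rightarrow> agent' \<Rightarrow> object' \<Rightarrow> nat" where
  "agent_block PA (Ag i) (Ob ob) = (if strict (PA i) (Some ob) None then 0 else 3)"
| "agent_block PA (Ag i) (Ph k) = (if k = i then 1 else 2)"
| "agent_block PA (Dm j) (Ob ob) = (if ob = j then 0 else 1)"
| "agent_block PA (Dm j) (Ph k) = 2"

fun agent_within ::
  "(nat \<Rightarrow> nat option \<Rightarrow> nat option \<Rightarrow> bool) \<Rightarrow> (nat \<Rightarrow> nat option \<Rightarrow> nat option \<Rightarrow> bool)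
     \<Rightarrow> agent' \<Rightarrow> object' \<Rightarrow> object' \<Rightarrow> bool" where
  "agent_within PA PO (Ag i) (Ob ob) (Ob ob') = PA i (Some ob) (Some ob')"
| "agent_within PA PO (Ag i) (Ph k) (Ph l) = (k \<le> l)"
| "agent_within PA PO (Dm j) (Ob ob) (Ob ob') = (ob \<le> ob')"
| "agent_within PA PO (Dm j) (Ph k) (Ph l) = PO j (Some k) (Some l)"
| "agent_within PA PO a x y = False"

definition assoc_agent_pref ::
  "(nat \<Rightarrow> nat option \<Rightarrow> nat option \<Rightarrow> bool) \<Rightarrow> (nat \<Rightarrow> nat option \<Rightarrow> nat option \<Rightarrow> bool)
     \<Rightarrow> agent' \<Rightarrow> object' \<Rightarrow> object' \<Rightarrow> bool" where
  "assoc_agent_pref PA PO a = lexpref (agent_block PA a) (agent_within PA PO a)"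

fun object_block :: "(nat \<Rightarrow> nat option \<Rightarrow> nat option \<Rightarrow> bool) \<Rightarrow> object' \<Rightarrow> agent' \<Rightarrow> nat" where
  "object_block PO (Ob j) (Ag i) = (if strict (PO j) (Some i) None then 0 else 3)"
| "object_block PO (Ob j) (Dm k) = (if k = j then 1 else 2)"
| "object_block PO (Ph i) (Ag k) = (if k = i then 0 else 1)"
| "object_block PO (Ph i) (Dm k) = 2"

fun object_within ::
  "(nat \<Rightarrow> nat option \<Rightarrow> nat option \<Rightarrow> bool) \<Rightarrow> (nat \<Rightarrow> nat option \<Rightarrow> nat option \<Rightarrow> bool)
     \<Rightarrow> object' \<Rightarrow> agent' \<Rightarrow> agent' \<Rightarrow> bool" where
  "object_within PA PO (Ob j) (Ag i) (Ag i') = PO j (Some i) (Some i')"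
| "object_within PA PO (Ob j) (Dm k) (Dm l) = (k \<le> l)"
| "object_within PA PO (Ph i) (Ag k) (Ag l) = (k \<le> l)"
| "object_within PA PO (Ph i) (Dm k) (Dm l) = PA i (Some k) (Some l)"
| "object_within PA PO c x y = False"

definition assoc_object_pref ::
  "(nat \<Rightarrow> nat option \<Rightarrow> nat option \<Rightarrow> bool) \<Rightarrow> (nat \<Rightarrow> nat option \<Rightarrow> nat option \<Rightarrow> bool)
     \<Rightarrow> object' \<Rightarrow> agent' \<Rightarrow> agent' \<Rightarrow> bool" where
  "assoc_object_pref PA PO c = lexpref (object_block PO c) (object_within PA PO c)"

fun assoc_matching :: "nat \<Rightarrow> nat \<Rightarrow> (nat \<Rightarrow> nat \<Rightarrow> nat) \<Rightarrow> agent' \<Rightarrow> object' \<Rightarrow> nat" where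
  "assoc_matching n m p (Ag i) (Ob j) = p i j"
| "assoc_matching n m p (Dm j) (Ph i) = p i j"
| "assoc_matching n m p (Ag i) (Ph k) = (if k = i then 1 - (\<Sum>ob=1..m. p i ob) else 0)"
| "assoc_matching n m p (Dm j) (Ob k) = (if k = j then 1 - (\<Sum>i=1..n. p i j) else 0)"

definition weakly_stable_det ::
  "agent' set \<Rightarrow> object' set \<Rightarrow> (agent' \<Rightarrow> object' \<Rightarrow> object' \<Rightarrow> bool)
     \<Rightarrow> (object' \<Rightarrow> agent' \<Rightarrow> agent' \<Rightarrow> bool) \<Rightarrow> (agent' \<Rightarrow> object' \<Rightarrow> nat) \<Rightarrow> bool" where
  "weakly_stable_det AS OS RA RO q \<longleftrightarrow>
     \<not> (\<exists>a\<in>AS. \<exists>b\<in>AS. \<exists>c\<in>OS. \<exists>c'\<in>OS.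
          q a c' = 1 \<and> q b c = 1 \<and> strict (RA a) c c' \<and> strict (RO c) a b)"

end

theory Submission
  imports Defs
begin

lemma strict_trans_on:
  assumes "weak_order_on A R" "x \<in> A" "y \<in> A" "z \<in> A" "strict R x y" "strict R y z"
  shows "strict R x z"
  using assms unfolding weak_order_on_def strict_def by metis

locale inst =
  fixes n m :: nat and PA PO :: "nat \<Rightarrow> nat option \<Rightarrow> nat option \<Rightarrow> bool"
    and p :: "nat \<Rightarrow> nat \<Rightarrow> nat"
  assumes gi: "general_instance n m PA PO" and gm: "gen_det_matching n m p"
begin

lemma A_wo: "i \<in> {1..n} \<Longrightarrow> weak_order_on (Some ` {1..m} \<union> {None}) (PA i)"
  using gi unfolding general_instance_def by blast
lemma O_wo: "j \<in> {1..m} \<Longrightarrow> weak_order_on (Some ` {1..n} \<union> {None}) (PO j)"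
  using gi unfolding general_instance_def by blast
lemma A_acc: "i \<in> {1..n} \<Longrightarrow> ob \<in> {1..m} \<Longrightarrow>
   strict (PA i) (Some ob) None \<or> strict (PA i) None (Some ob)"
  using gi unfolding general_instance_def by blast
lemma O_acc: "j \<in> {1..m} \<Longrightarrow> i \<in> {1..n} \<Longrightarrow>
   strict (PO j) (Some i) None \<or> strict (PO j) None (Some i)"
  using gi unfolding general_instance_def by blast
lemma A_total: "i \<in> {1..n} \<Longrightarrow> a \<in> {1..m} \<Longrightarrow> b \<in> {1..m} \<Longrightarrow>
   PA i (Some a) (Some b) \<or> PA i (Some b) (Some a)"
  using A_wo[of i] unfolding weak_order_on_def by blast
lemma O_total: "j \<in> {1..m} \<Longrightarrow> a \<in> {1..n} \<Longrightarrow> b \<in> {1..n} \<Longrightarrow>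
   PO j (Some a) (Some b) \<or> PO j (Some b) (Some a)"
  using O_wo[of j] unfolding weak_order_on_def by blast

lemma p01: "i \<in> {1..n} \<Longrightarrow> j \<in> {1..m} \<Longrightarrow> p i j \<noteq> 1 \<Longrightarrow> p i j = 0"
  using gm unfolding gen_det_matching_def by blast

lemma row_uniq: "i \<in> {1..n} \<Longrightarrow> j \<in> {1..m} \<Longrightarrow> j' \<in> {1..m} \<Longrightarrow> p i j = 1 \<Longrightarrow> p i j' = 1 \<Longrightarrow> j = j'"
proof -
  assume a: "i \<in> {1..n}" "j \<in> {1..m}" "j' \<in> {1..m}" "p i j = 1" "p i j' = 1"
  have "card {j\<in>{1..m}. p i j = 1} \<le> Suc 0" using gm a(1) unfolding gen_det_matching_def by auto
  then have "\<forall>x\<in>{j\<in>{1..m}. p i j = 1}. \<forall>y\<in>{j\<in>{1..m}. p i j = 1}. x = y"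
    using card_le_Suc0_iff_eq[of "{j\<in>{1..m}. p i j = 1}"] by auto
  then show ?thesis using a by blast
qed

lemma col_uniq: "i \<in> {1..n} \<Longrightarrow> i' \<in> {1..n} \<Longrightarrow> j \<in> {1..m} \<Longrightarrow> p i j = 1 \<Longrightarrow> p i' j = 1 \<Longrightarrow> i = i'"
proof -
  assume a: "i \<in> {1..n}" "i' \<in> {1..n}" "j \<in> {1..m}" "p i j = 1" "p i' j = 1"
  have "card {i\<in>{1..n}. p i j = 1} \<le> Suc 0" using gm a(3) unfolding gen_det_matching_def by auto
  then have "\<forall>x\<in>{i\<in>{1..n}. p i j = 1}. \<forall>y\<in>{i\<in>{1..n}. p i j = 1}. x = y"
    using card_le_Suc0_iff_eq[of "{i\<in>{1..n}. p i j = 1}"] by auto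
  then show ?thesis using a by blast
qed

abbreviation "q \<equiv> assoc_matching n m p"

lemma q_AgPh: "i \<in> {1..n} \<Longrightarrow> q (Ag i) (Ph k) = 1 \<longleftrightarrow> k = i \<and> (\<forall>j\<in>{1..m}. p i j \<noteq> 1)"
proof -
  assume i: "i \<in> {1..n}"
  have "(\<Sum>ob=1..m. p i ob) = 0 \<longleftrightarrow> (\<forall>j\<in>{1..m}. p i j \<noteq> 1)"
    using p01[OF i] by (auto simp: sum_eq_0_iff)
  moreover have "((1::nat) - (\<Sum>ob=1..m. p i ob) = 1) \<longleftrightarrow> (\<Sum>ob=1..m. p i ob) = 0" by arith
  ultimately show ?thesis by simp
qed

lemma q_DmOb: "j \<in> {1..m} \<Longrightarrow> q (Dm j) (Ob k) = 1 \<longleftrightarrow> k = j \<and> (\<forall>i\<in>{1..n}. p i j \<noteq> 1)"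
proof -
  assume j: "j \<in> {1..m}"
  have "(\<Sum>i=1..n. p i j) = 0 \<longleftrightarrow> (\<forall>i\<in>{1..n}. p i j \<noteq> 1)"
    using p01[OF _ j] by (auto simp: sum_eq_0_iff)
  moreover have "((1::nat) - (\<Sum>i=1..n. p i j) = 1) \<longleftrightarrow> (\<Sum>i=1..n. p i j) = 0" by arith
  ultimately show ?thesis by simp
qed

lemma IR_lem:
  assumes IR: "individually_rational n m PA PO p" and i: "i \<in> {1..n}" and j: "j \<in> {1..m}"
    and pij: "p i j = 1"
  shows "strict (PA i) (Some j) None \<and> strict (PO j) (Some i) None"
  using IR i j pij A_acc[OF i j] O_acc[OF j i] unfolding individually_rational_def by force

lemma ws_noblock:
  assumes ws: "weakly_stable n m PA PO p" and i: "i \<in> {1..n}" and j: "j \<in> {1..m}"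
    and acc: "acceptable PA PO i j"
    and pa: "\<forall>j'\<in>{1..m}. p i j' = 1 \<longrightarrow> strict (PA i) (Some j) (Some j')"
    and po: "\<forall>k\<in>{1..n}. p k j = 1 \<longrightarrow> strict (PO j) (Some i) (Some k)"
  shows False
proof -
  have s1: "(\<Sum>ob'\<in>{ob'\<in>{1..m}. PA i (Some ob') (Some j)}. p i ob') = 0"
  proof (rule sum.neutral, rule ballI)
    fix x assume x: "x \<in> {ob'\<in>{1..m}. PA i (Some ob') (Some j)}"
    have x1: "x \<in> {1..m}" and x2: "PA i (Some x) (Some j)" using x by auto
    have "p i x \<noteq> 1" using pa x1 x2 unfolding strict_def by auto
    then show "p i x = 0" using p01[OF i x1] by blast
  qed
  have s2: "(\<Sum>k\<in>{k\<in>{1..n}. PO j (Some k) (Some i)}. p k j) = 0"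
  proof (rule sum.neutral, rule ballI)
    fix x assume x: "x \<in> {k\<in>{1..n}. PO j (Some k) (Some i)}"
    have x1: "x \<in> {1..n}" and x2: "PO j (Some x) (Some i)" using x by auto
    have "p x j \<noteq> 1" using po x1 x2 unfolding strict_def by auto
    then show "p x j = 0" using p01[OF x1 j] by blast
  qed
  show False using ws i j acc s1 s2 unfolding weakly_stable_def by blast
qed

lemmas S = strict_def assoc_agent_pref_def assoc_object_pref_def lexpref_def

lemma fwd:
  assumes ws: "weakly_stable n m PA PO p"
  shows "weakly_stable_det (N' n m) (O' n m) (assoc_agent_pref PA PO) (assoc_object_pref PA PO) q"
  unfolding weakly_stable_det_def
proof
  have IR: "individually_rational n m PA PO p" using ws unfolding weakly_stable_def by blast
  assume "\<exists>a\<in>N' n m. \<exists>b\<in>N' n m. \<exists>c\<in>O' n m. \<exists>c'\<in>O' n m.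
          q a c' = 1 \<and> q b c = 1 \<and> strict (assoc_agent_pref PA PO a) c c' \<and>
          strict (assoc_object_pref PA PO c) a b"
  then obtain a b c c' where aN: "a \<in> N' n m" and bN: "b \<in> N' n m" and cO: "c \<in> O' n m"
    and c'O: "c' \<in> O' n m" and qa: "q a c' = 1" and qb: "q b c = 1"
    and sA: "strict (assoc_agent_pref PA PO a) c c'" and sO: "strict (assoc_object_pref PA PO c) a b"
    by blast
  show False
  proof (cases a)
    case (Ag i)
    have i: "i \<in> {1..n}" using aN Ag by (auto simp: N'_def)
    show False
    proof (cases c)
      case (Ob j)
      have j: "j \<in> {1..m}" using cO Ob by (auto simp: O'_def)
      have PAc: "strict (PA i) (Some j) None \<and> (\<forall>j'\<in>{1..m}. p i j' = 1 \<longrightarrow> strict (PA i) (Some j) (Some j'))"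
      proof (cases c')
        case (Ob j')
        have j': "j' \<in> {1..m}" using c'O Ob by (auto simp: O'_def)
        have pij': "p i j' = 1" using qa Ag Ob by simp
        have acc': "strict (PA i) (Some j') None" using IR_lem[OF IR i j' pij'] by blast
        have "strict (PA i) (Some j) None \<and> strict (PA i) (Some j) (Some j')"
          using sA acc' Ag Ob \<open>c = Ob j\<close> by (auto simp: S split: if_splits)
        then show ?thesis using row_uniq[OF i _ j' _ pij'] by blast
      next
        case (Ph k)
        have "\<forall>j'\<in>{1..m}. p i j' \<noteq> 1" "k = i" using qa Ag Ph q_AgPh[OF i] by auto
        moreover have "strict (PA i) (Some j) None"
          using sA Ag Ph \<open>c = Ob j\<close> \<open>k = i\<close> by (auto simp: S split: if_splits)
        ultimately show ?thesis by blast
      qed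
      have POc: "strict (PO j) (Some i) None \<and> (\<forall>k\<in>{1..n}. p k j = 1 \<longrightarrow> strict (PO j) (Some i) (Some k))"
      proof (cases b)
        case (Ag k)
        have k: "k \<in> {1..n}" using bN Ag by (auto simp: N'_def)
        have pkj: "p k j = 1" using qb Ag Ob by simp
        have acc': "strict (PO j) (Some k) None" using IR_lem[OF IR k j pkj] by blast
        have "strict (PO j) (Some i) None \<and> strict (PO j) (Some i) (Some k)"
          using sO acc' Ag Ob \<open>a = Ag i\<close> by (auto simp: S split: if_splits)
        then show ?thesis using col_uniq[OF _ k j _ pkj] by blast
      next
        case (Dm l)
        have l: "l \<in> {1..m}" using bN Dm by (auto simp: N'_def)
        have "\<forall>k\<in>{1..n}. p k j \<noteq> 1" "l = j" using qb Dm Ob q_DmOb[OF l] by auto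
        moreover have "strict (PO j) (Some i) None"
          using sO Dm Ob \<open>a = Ag i\<close> \<open>l = j\<close> by (auto simp: S split: if_splits)
        ultimately show ?thesis by blast
      qed
      show False using ws_noblock[OF ws i j _ ] PAc POc unfolding acceptable_def by blast
    next
      case (Ph k)
      have k: "k \<in> {1..n}" using cO Ph by (auto simp: O'_def)
      show False
      proof (cases b)
        case (Ag k')
        have k': "k' \<in> {1..n}" using bN Ag by (auto simp: N'_def)
        have "k = k'" using qb Ag Ph q_AgPh[OF k'] by auto
        then show False using sO Ag Ph \<open>a = Ag i\<close> by (auto simp: S split: if_splits)
      next
        case (Dm j)
        show False
        proof (cases c')
          case (Ob j')
          have j': "j' \<in> {1..m}" using c'O Ob by (auto simp: O'_def)
          have pij': "p i j' = 1" using qa \<open>a = Ag i\<close> Ob by simp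
          have acc': "strict (PA i) (Some j') None" using IR_lem[OF IR i j' pij'] by blast
          then show False using sA \<open>a = Ag i\<close> Ob Ph by (auto simp: S split: if_splits)
        next
          case (Ph k')
          have "k' = i" using qa \<open>a = Ag i\<close> Ph q_AgPh[OF i] by auto
          then show False using sA \<open>a = Ag i\<close> Ph \<open>c = Ph k\<close> by (auto simp: S split: if_splits)
        qed
      qed
    qed
  next
    case (Dm j)
    have j: "j \<in> {1..m}" using aN Dm by (auto simp: N'_def)
    show False
    proof (cases c)
      case (Ob l)
      have l: "l \<in> {1..m}" using cO Ob by (auto simp: O'_def)
      show False
      proof (cases c')
        case (Ob j')
        have "j' = j" using qa Dm Ob q_DmOb[OF j] by auto
        then show False using sA Dm Ob \<open>c = Ob l\<close> by (auto simp: S split: if_splits)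
      next
        case (Ph i)
        show False
        proof (cases b)
          case (Ag k)
          have k: "k \<in> {1..n}" using bN Ag by (auto simp: N'_def)
          have pkl: "p k l = 1" using qb Ag \<open>c = Ob l\<close> by simp
          have acc': "strict (PO l) (Some k) None" using IR_lem[OF IR k l pkl] by blast
          then show False using sO Ag \<open>c = Ob l\<close> Dm by (auto simp: S split: if_splits)
        next
          case (Dm l')
          have l': "l' \<in> {1..m}" using bN Dm by (auto simp: N'_def)
          have "l = l'" using qb Dm \<open>c = Ob l\<close> q_DmOb[OF l'] by auto
          then show False using sO Dm \<open>c = Ob l\<close> \<open>a = Dm j\<close> by (auto simp: S split: if_splits)
        qed
      qed
    next
      case (Ph k)
      have k: "k \<in> {1..n}" using cO Ph by (auto simp: O'_def)
      show False
      proof (cases c')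
        case (Ob j')
        have "j' = j" using qa Dm Ob q_DmOb[OF j] by auto
        then show False using sA Dm Ob \<open>c = Ph k\<close> by (auto simp: S split: if_splits)
      next
        case (Ph i)
        have i: "i \<in> {1..n}" using c'O Ph by (auto simp: O'_def)
        have pij: "p i j = 1" using qa Dm Ph by simp
        have sPO: "strict (PO j) (Some k) (Some i)"
          using sA Dm Ph \<open>c = Ph k\<close> by (auto simp: S split: if_splits)
        show False
        proof (cases b)
          case (Ag k')
          have k': "k' \<in> {1..n}" using bN Ag by (auto simp: N'_def)
          have "k = k'" using qb Ag \<open>c = Ph k\<close> q_AgPh[OF k'] by auto
          then show False using sO Ag \<open>c = Ph k\<close> Dm by (auto simp: S split: if_splits)
        next
          case (Dm j')
          have j': "j' \<in> {1..m}" using bN Dm by (auto simp: N'_def)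
          have pkj': "p k j' = 1" using qb Dm \<open>c = Ph k\<close> by simp
          have sPA: "strict (PA k) (Some j) (Some j')"
            using sO Dm \<open>c = Ph k\<close> \<open>a = Dm j\<close> by (auto simp: S split: if_splits)
          have IRk: "strict (PA k) (Some j') None" using IR_lem[OF IR k j' pkj'] by blast
          have IRi: "strict (PO j) (Some i) None" using IR_lem[OF IR i j pij] by blast
          have a1: "strict (PA k) (Some j) None"
            by (rule strict_trans_on[OF A_wo[OF k] _ _ _ sPA IRk]) (use j j' in auto)
          have a2: "strict (PO j) (Some k) None"
            by (rule strict_trans_on[OF O_wo[OF j] _ _ _ sPO IRi]) (use i k in auto)
          show False
          proof (rule ws_noblock[OF ws k j])
            show "acceptable PA PO k j" using a1 a2 unfolding acceptable_def by blast
            show "\<forall>j''\<in>{1..m}. p k j'' = 1 \<longrightarrow> strict (PA k) (Some j) (Some j'')"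
              using row_uniq[OF k _ j' _ pkj'] sPA by blast
            show "\<forall>k''\<in>{1..n}. p k'' j = 1 \<longrightarrow> strict (PO j) (Some k) (Some k'')"
              using col_uniq[OF _ i j _ pij] sPO by blast
          qed
        qed
      qed
    qed
  qed
qed

lemma bwd:
  assumes det: "weakly_stable_det (N' n m) (O' n m) (assoc_agent_pref PA PO) (assoc_object_pref PA PO) q"
  shows "weakly_stable n m PA PO p"
proof -
  have noblk: False if "a \<in> N' n m" "b \<in> N' n m" "c \<in> O' n m" "c' \<in> O' n m" "q a c' = 1" "q b c = 1"
      "strict (assoc_agent_pref PA PO a) c c'" "strict (assoc_object_pref PA PO c) a b" for a b c c'
    using det that unfolding weakly_stable_det_def by blast
  have IR: "individually_rational n m PA PO p"
    unfolding individually_rational_def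
  proof (intro ballI impI)
    fix i ob assume i: "i \<in> {1..n}" and ob: "ob \<in> {1..m}"
      and h: "strict (PA i) None (Some ob) \<or> strict (PO ob) None (Some i)"
    show "p i ob = 0"
    proof (rule p01[OF i ob], rule notI)
      assume pio: "p i ob = 1"
      show False
      proof (cases "strict (PA i) None (Some ob)")
        case True
        show False
        proof (rule noblk[of "Ag i" "Dm ob" "Ph i" "Ob ob"])
        qed (use i ob pio True in \<open>auto simp: N'_def O'_def S\<close>)
      next
        case False
        then have h2: "strict (PO ob) None (Some i)" using h by blast
        show False
        proof (rule noblk[of "Dm ob" "Ag i" "Ob ob" "Ph i"])
        qed (use i ob pio h2 in \<open>auto simp: N'_def O'_def S\<close>)
      qed
    qed
  qed
  moreover have "\<not> (\<exists>i\<in>{1..n}. \<exists>ob\<in>{1..m}. acceptable PA PO i ob \<and>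
          (\<Sum>ob'\<in>{ob'\<in>{1..m}. PA i (Some ob') (Some ob)}. p i ob') = 0 \<and>
          (\<Sum>j\<in>{j\<in>{1..n}. PO ob (Some j) (Some i)}. p j ob) = 0)"
  proof
    assume "\<exists>i\<in>{1..n}. \<exists>ob\<in>{1..m}. acceptable PA PO i ob \<and>
          (\<Sum>ob'\<in>{ob'\<in>{1..m}. PA i (Some ob') (Some ob)}. p i ob') = 0 \<and>
          (\<Sum>j\<in>{j\<in>{1..n}. PO ob (Some j) (Some i)}. p j ob) = 0"
    then obtain i ob where i: "i \<in> {1..n}" and ob: "ob \<in> {1..m}" and acc: "acceptable PA PO i ob"
      and s1: "(\<Sum>ob'\<in>{ob'\<in>{1..m}. PA i (Some ob') (Some ob)}. p i ob') = 0"
      and s2: "(\<Sum>j\<in>{j\<in>{1..n}. PO ob (Some j) (Some i)}. p j ob) = 0" by blast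
    have accA: "strict (PA i) (Some ob) None" and accO: "strict (PO ob) (Some i) None"
      using acc unfolding acceptable_def by auto
    have r1: "strict (PA i) (Some ob) (Some j')" if "j' \<in> {1..m}" "p i j' = 1" for j'
    proof -
      have "\<not> PA i (Some j') (Some ob)" using s1 that by (auto simp: sum_eq_0_iff)
      then show ?thesis using A_total[OF i ob that(1)] unfolding strict_def by blast
    qed
    have r2: "strict (PO ob) (Some i) (Some k)" if "k \<in> {1..n}" "p k ob = 1" for k
    proof -
      have "\<not> PO ob (Some k) (Some i)" using s2 that by (auto simp: sum_eq_0_iff)
      then show ?thesis using O_total[OF ob i that(1)] unfolding strict_def by blast
    qed
    obtain c' where c'O: "c' \<in> O' n m" and qa: "q (Ag i) c' = 1"
      and sA: "strict (assoc_agent_pref PA PO (Ag i)) (Ob ob) c'"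
    proof (cases "\<exists>j'\<in>{1..m}. p i j' = 1")
      case True
      then obtain j' where j': "j' \<in> {1..m}" "p i j' = 1" by blast
      have "strict (PA i) (Some ob) (Some j')" using r1 j' by blast
      then have "strict (assoc_agent_pref PA PO (Ag i)) (Ob ob) (Ob j')"
        using accA by (auto simp: S)
      then show ?thesis using that[of "Ob j'"] j' by (auto simp: O'_def)
    next
      case False
      then have "q (Ag i) (Ph i) = 1" using q_AgPh[OF i] by blast
      moreover have "strict (assoc_agent_pref PA PO (Ag i)) (Ob ob) (Ph i)"
        using accA by (auto simp: S)
      ultimately show ?thesis using that[of "Ph i"] i by (auto simp: O'_def)
    qed
    obtain b where bN: "b \<in> N' n m" and qb: "q b (Ob ob) = 1"
      and sO: "strict (assoc_object_pref PA PO (Ob ob)) (Ag i) b"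
    proof (cases "\<exists>k\<in>{1..n}. p k ob = 1")
      case True
      then obtain k where k: "k \<in> {1..n}" "p k ob = 1" by blast
      have "strict (PO ob) (Some i) (Some k)" using r2 k by blast
      then have "strict (assoc_object_pref PA PO (Ob ob)) (Ag i) (Ag k)"
        using accO by (auto simp: S)
      then show ?thesis using that[of "Ag k"] k by (auto simp: N'_def)
    next
      case False
      then have "q (Dm ob) (Ob ob) = 1" using q_DmOb[OF ob] by blast
      moreover have "strict (assoc_object_pref PA PO (Ob ob)) (Ag i) (Dm ob)"
        using accO by (auto simp: S)
      ultimately show ?thesis using that[of "Dm ob"] ob by (auto simp: N'_def)
    qed
    show False
      by (rule noblk[OF _ bN _ c'O qa qb sA sO]) (use i ob in \<open>auto simp: N'_def O'_def\<close>)
  qed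
  ultimately show ?thesis unfolding weakly_stable_def by blast
qed

end

theorem proposition22:
  fixes n m :: nat
    and PA PO :: "nat \<Rightarrow> nat option \<Rightarrow> nat option \<Rightarrow> bool"
    and p :: "nat \<Rightarrow> nat \<Rightarrow> nat"
  assumes "n \<ge> 1" and "m \<ge> 1"
    and "general_instance n m PA PO"
    and "gen_det_matching n m p"
  shows "weakly_stable n m PA PO p \<longleftrightarrow>
         weakly_stable_det (N' n m) (O' n m) (assoc_agent_pref PA PO) (assoc_object_pref PA PO)
           (assoc_matching n m p)"
proof -
  interpret inst n m PA PO p using assms(3,4) by unfold_locales
  show ?thesis using fwd bwd by blast
qed

end
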